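(* Let $\alpha\in\mathbb{C}$ and let $S_n(x)\sim\left(\left(\frac{e^t+1}{2}\right)^{\alpha},\ \frac{t^2}{\log(1+t)}\right)$. Then for $n\ge1$, $$S_n(x)=\sum_{l=0}^{n-1}\binom{n-1}{l}N_l^{(n)}\,E_{n-l}^{(\alpha)}(x).$$
   Context: For invertible $g(t)$ (nonzero constant term) and delta series $f(t)$ ($f(0)=0$, nonzero coefficient of $t$), the Sheffer sequence $S_n(x)\sim(g(t),f(t))$ is the unique polynomial sequence with $\sum_{k\ge0}S_k(y)\frac{t^k}{k!}=\frac{1}{g(\bar f(t))}e^{y\bar f(t)}$ for all $y\in\mathbb{C}$, where $\bar f$ is the compositional inverse of $f$. Complex powers of series with constant term $1$ are defined by $h^a=\exp(a\log h)$. The Narumi polynomials of order $a$ are defined by $\left(\frac{\log(1+t)}{t}\right)^a(1+t)^x=\sum_{n\ge0}N_n^{(a)}(x)\frac{t^n}{n!}$, and the Narumi numbers are $N_n^{(a)}=N_n^{(a)}(0)$. The Euler polynomials of order $\alpha$ are defined by $\left(\frac{2}{e^t+1}\right)^{\alpha}e^{xt}=\sum_{n\ge0}E_n^{(\alpha)}(x)\frac{t^n}{n!}$. *)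

theory Defs
  imports "HOL-Computational_Algebra.Computational_Algebra"
begin

text \<open>Logarithm of a formal power series with constant term 1:
  log h = log(1+u) composed with u = h - 1.  (fps_ln 1 is the series of log(1+t).)\<close>
definition fps_log1 :: "complex fps \<Rightarrow> complex fps" where
  "fps_log1 h = fps_ln 1 oo (h - 1)"

text \<open>Complex power of a series with constant term 1: h^a = exp(a log h).
  (fps_exp a is the series of exp(a t).)\<close>
definition fps_cpow :: "complex fps \<Rightarrow> complex \<Rightarrow> complex fps" where
  "fps_cpow h a = fps_exp a oo fps_log1 h"

definition sheffer :: "(nat \<Rightarrow> complex poly) \<Rightarrow> complex fps \<Rightarrow> complex fps \<Rightarrow> bool" where
  "sheffer S g f \<longleftrightarrow>
     (\<forall>y::complex. Abs_fps (\<lambda>k. poly (S k) y / fact k)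
        = inverse (g oo fps_inv f) * (fps_exp y oo fps_inv f))"

definition narumi_poly :: "nat \<Rightarrow> complex \<Rightarrow> complex \<Rightarrow> complex" where
  "narumi_poly n a x = fact n *
     (fps_cpow (fps_ln 1 / fps_X) a * fps_cpow (1 + fps_X) x) $ n"

definition narumi_num :: "nat \<Rightarrow> complex \<Rightarrow> complex" where
  "narumi_num n a = narumi_poly n a 0"

definition euler_poly :: "nat \<Rightarrow> complex \<Rightarrow> complex \<Rightarrow> complex" where
  "euler_poly n \<alpha> x = fact n *
     (fps_cpow (fps_const 2 / (fps_exp 1 + 1)) \<alpha> * fps_exp x) $ n"

end

theory Submission
  imports Defs
begin

lemma ode_unique:
  fixes C D w :: "complex fps"
  assumes C': "fps_deriv C = fps_const c * C * w" and D': "fps_deriv D = fps_const c * D * w"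
    and C0: "C$0 = 1" and D0: "D$0 = 1"
  shows "C = D"
proof -
  have D0': "D$0 \<noteq> 0" using D0 by simp
  have iD: "D * inverse D = 1" using inverse_mult_eq_1'[OF D0'] .
  have "fps_deriv (C * inverse D) = C * (- fps_deriv D * (inverse D)\<^sup>2) + fps_deriv C * inverse D"
    using fps_inverse_deriv[OF D0'] by simp
  also have "\<dots> = fps_const c * C * w * inverse D * (1 - D * inverse D)"
    unfolding C' D' by (simp add: power2_eq_square algebra_simps)
  also have "\<dots> = 0" using iD by simp
  finally have "fps_deriv (C * inverse D) = fps_deriv 0" by simp
  hence "C * inverse D = fps_const ((C * inverse D)$0)"
    unfolding fps_deriv_eq_iff by simp
  also have "(C * inverse D)$0 = 1" using C0 D0 by (simp add: fps_inverse_def)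
  finally have e: "C * inverse D = 1" by simp
  have "C = C * (inverse D * D)" using iD by (simp add: mult.commute)
  also have "\<dots> = D" using e by (metis mult.assoc mult_1)
  finally show ?thesis .
qed

lemma log1_0: "h$0 = 1 \<Longrightarrow> fps_log1 h $ 0 = 0"
  by (simp add: fps_log1_def fps_ln_nth)

lemma log1_deriv:
  assumes h0: "h$0 = 1"
  shows "fps_deriv (fps_log1 h) = fps_deriv h * inverse h"
proof -
  have b0: "(h - 1)$0 = 0" using h0 by simp
  have "fps_deriv (fps_log1 h) = (fps_deriv (fps_ln 1) oo (h - 1)) * fps_deriv h"
    unfolding fps_log1_def using fps_compose_deriv[OF b0] by simp
  also have "fps_deriv (fps_ln 1) oo (h - 1) = inverse (1 + fps_X) oo (h - 1)"
    by (simp add: fps_ln_deriv)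
  also have "\<dots> = inverse ((1 + fps_X) oo (h - 1))"
    by (rule fps_inverse_compose[OF b0]) simp
  also have "(1 + fps_X) oo (h - 1) = h"
    using b0 by (simp add: fps_compose_add_distrib)
  finally show ?thesis by (simp add: mult.commute)
qed

lemma cpow_deriv:
  assumes h0: "h$0 = 1"
  shows "fps_deriv (fps_cpow h a) = fps_const a * fps_cpow h a * (fps_deriv h * inverse h)"
proof -
  have "fps_deriv (fps_cpow h a) = (fps_deriv (fps_exp a) oo fps_log1 h) * fps_deriv (fps_log1 h)"
    unfolding fps_cpow_def by (rule fps_compose_deriv[OF log1_0[OF h0]])
  also have "fps_deriv (fps_exp a) oo fps_log1 h = fps_const a * fps_cpow h a"
    unfolding fps_cpow_def fps_exp_deriv
    by (simp add: fps_compose_mult_distrib[OF log1_0[OF h0]])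
  finally show ?thesis using log1_deriv[OF h0] by simp
qed

lemma cpow_0: "h$0 = 1 \<Longrightarrow> fps_cpow h a $ 0 = 1"
  by (simp add: fps_cpow_def)

lemma cpow_inverse:
  assumes h0: "h$0 = 1"
  shows "fps_cpow (inverse h) a = inverse (fps_cpow h a)"
proof (rule ode_unique)
  have ih0: "inverse h $ 0 = 1" using h0 by (simp add: fps_inverse_def)
  have h0': "h$0 \<noteq> 0" using h0 by simp
  have C0': "fps_cpow h a $ 0 \<noteq> 0" using cpow_0[OF h0] by simp
  show "fps_deriv (fps_cpow (inverse h) a) = fps_const a * fps_cpow (inverse h) a *
          (fps_deriv (inverse h) * inverse (inverse h))"
    by (rule cpow_deriv[OF ih0])
  show "fps_deriv (inverse (fps_cpow h a)) = fps_const a * inverse (fps_cpow h a) *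
          (fps_deriv (inverse h) * inverse (inverse h))"
  proof -
    have "fps_deriv (inverse (fps_cpow h a)) =
      - (fps_const a * fps_cpow h a * (fps_deriv h * inverse h)) * (inverse (fps_cpow h a))\<^sup>2"
      using fps_inverse_deriv[OF C0'] cpow_deriv[OF h0, of a] by simp
    also have "\<dots> = fps_const a * inverse (fps_cpow h a) * (- fps_deriv h * (inverse h)\<^sup>2 * h)
       * (fps_cpow h a * inverse (fps_cpow h a))"
      using inverse_mult_eq_1'[OF h0'] by (simp add: power2_eq_square algebra_simps)
    also have "\<dots> = fps_const a * inverse (fps_cpow h a) * (fps_deriv (inverse h) * inverse (inverse h))"
      using inverse_mult_eq_1'[OF C0'] fps_inverse_deriv[OF h0'] fps_inverse_idempotent[OF h0'] by simp
    finally show ?thesis .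
  qed
  show "fps_cpow (inverse h) a $ 0 = 1" using cpow_0[OF ih0] .
  show "inverse (fps_cpow h a) $ 0 = 1" using cpow_0[OF h0] by (simp add: fps_inverse_def)
qed

lemma cpow_nat:
  assumes h0: "h$0 = 1"
  shows "fps_cpow h (of_nat n) = h ^ n"
proof (rule ode_unique)
  show "fps_deriv (fps_cpow h (of_nat n)) = fps_const (of_nat n) * fps_cpow h (of_nat n) *
          (fps_deriv h * inverse h)"
    by (rule cpow_deriv[OF h0])
  have h0': "h$0 \<noteq> 0" using h0 by simp
  show "fps_deriv (h ^ n) = fps_const (of_nat n) * h ^ n * (fps_deriv h * inverse h)"
  proof (cases n)
    case 0 thus ?thesis by simp
  next
    case (Suc m)
    have "h ^ n * (fps_deriv h * inverse h) = h^m * fps_deriv h * (h * inverse h)"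
      using Suc by (simp add: algebra_simps)
    also have "\<dots> = h^m * fps_deriv h" using inverse_mult_eq_1'[OF h0'] by simp
    finally have e: "h ^ n * (fps_deriv h * inverse h) = h^m * fps_deriv h" .
    have "fps_deriv (h ^ n) = fps_const (of_nat n) * fps_deriv h * h ^ m"
      using fps_deriv_power[of h n] Suc by simp
    moreover have "fps_const (of_nat n) * h ^ n * (fps_deriv h * inverse h) = fps_const (of_nat n) * (h^m * fps_deriv h)"
      by (simp only: mult.assoc e)
    ultimately show ?thesis by (metis mult.commute mult.assoc)
  qed
  show "fps_cpow h (of_nat n) $ 0 = 1" by (rule cpow_0[OF h0])
  show "(h ^ n) $ 0 = 1" using h0 by (simp add: fps_nth_power_0)
qed


lemma coeff_deriv_pow:
  fixes Q :: "complex fps"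
  assumes k: "k \<ge> 1"
  shows "(fps_deriv Q * Q^(k-1)) $ (k-1) = (Q^k) $ k"
proof -
  have "fps_deriv (Q^k) $ (k-1) = of_nat k * (Q^k) $ k" using k by simp
  moreover have "fps_deriv (Q^k) = fps_const (of_nat k) * (fps_deriv Q * Q^(k-1))"
    by (simp add: fps_deriv_power mult.assoc)
  ultimately have "of_nat k * (fps_deriv Q * Q^(k-1)) $ (k-1) = of_nat k * (Q^k) $ k"
    by simp
  thus ?thesis using k by simp
qed

lemma Lam_F_pow:
  fixes Q :: "complex fps"
  assumes Q0: "Q$0 = 1" and i: "i \<le> n" and n: "1 \<le> n"
  shows "(fps_deriv ((fps_X * inverse Q)^i) * Q^n) $ (n-1) = (if i = n then of_nat n else 0)"
proof (cases "i = 0")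
  case True thus ?thesis using n by simp
next
  case False
  define V where "V = inverse Q"
  have Q0': "Q$0 \<noteq> 0" using Q0 by simp
  have VQ: "V * Q = 1" unfolding V_def using inverse_mult_eq_1[OF Q0'] .
  have VQp: "V^j * Q^j = 1" for j by (metis VQ power_mult_distrib power_one)
  have Qn: "Q^n = Q^i * Q^(n-i)" using i by (simp flip: power_add)
  have VQn: "V^i * Q^n = Q^(n-i)" using VQp[of i] by (simp add: Qn flip: mult.assoc)
  have d: "fps_deriv ((fps_X * V)^i) = fps_X^i * fps_deriv (V^i) + fps_const (of_nat i) * fps_X^(i-1) * V^i"
    by (simp add: power_mult_distrib fps_deriv_power algebra_simps)
  have e: "fps_deriv ((fps_X * V)^i) * Q^n = fps_X^i * (fps_deriv (V^i) * Q^n)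
      + fps_const (of_nat i) * (fps_X^(i-1) * Q^(n-i))"
    unfolding d using VQn by (simp add: algebra_simps flip: VQn)
  have c: "(fps_deriv ((fps_X * V)^i) * Q^n) $ (n-1) =
     (if n - 1 < i then 0 else (fps_deriv (V^i) * Q^n) $ (n-1-i))
      + of_nat i * (Q^(n-i)) $ (n-1-(i-1))"
    unfolding e using False n i by (simp add: fps_X_power_mult_nth)
  show ?thesis
  proof (cases "i = n")
    case True thus ?thesis using c n by (simp add: V_def fps_nth_power_0 Q0)
  next
    case ne: False
    define k where "k = n - i"
    have k1: "k \<ge> 1" using ne i k_def by simp
    have Vd: "fps_deriv V = - fps_deriv Q * V^2"
      unfolding V_def by (rule fps_inverse_deriv[OF Q0'])
    have nn: "n = (i+1) + (k-1)" using i ne k_def by simp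
    have Qn2: "Q^n = Q^(i+1) * Q^(k-1)" by (subst nn) (rule power_add)
    have "fps_deriv (V^i) * Q^n = - fps_const (of_nat i) * fps_deriv Q * (V^(i+1) * Q^n)"
    proof -
      have vv: "V^i = V*V^(i-1)" using False by (cases i) auto
      have "fps_deriv (V^i) * Q^n = fps_const (of_nat i) * (- fps_deriv Q * V^2) * V^(i-1) * Q^n"
        by (simp add: fps_deriv_power Vd)
      also have "\<dots> = - fps_const (of_nat i) * fps_deriv Q * (V * (V * V^(i-1)) * Q^n)"
        by (simp del: fps_const_neg add: power2_eq_square algebra_simps)
      also have "V * (V * V^(i-1)) = V^(i+1)" using vv by simp
      finally show ?thesis .
    qed
    also have "V^(i+1) * Q^n = Q^(k-1)"
      using VQp[of "i+1"] by (simp add: Qn2 flip: mult.assoc)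
    finally have w: "fps_deriv (V^i) * Q^n = - fps_const (of_nat i) * (fps_deriv Q * Q^(k-1))"
      by (simp add: mult.assoc)
    have "n - 1 - i = k - 1" "n - 1 - (i - 1) = k" using k_def False ne i by auto
    hence "(fps_deriv ((fps_X * V)^i) * Q^n) $ (n-1) =
        - of_nat i * (fps_deriv Q * Q^(k-1)) $ (k-1) + of_nat i * (Q^k) $ k"
      using c w ne i k_def by simp
    thus ?thesis using coeff_deriv_pow[OF k1, of Q] ne V_def by simp
  qed
qed


lemma Lam_cong:
  fixes R S Q :: "complex fps"
  assumes "\<And>j. 1 \<le> j \<Longrightarrow> j \<le> n \<Longrightarrow> R$j = S$j" and "1 \<le> n"
  shows "(fps_deriv R * Q^n) $ (n-1) = (fps_deriv S * Q^n) $ (n-1)"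
  unfolding fps_mult_nth
  by (rule sum.cong) (use assms in auto)

lemma lagrange:
  fixes Q H :: "complex fps"
  assumes Q0: "Q$0 = 1" and n: "1 \<le> n"
  shows "of_nat n * (H oo fps_inv (fps_X * inverse Q)) $ n = (fps_deriv H * Q^n) $ (n-1)"
proof -
  define F where "F = fps_X * inverse Q"
  define P where "P = H oo fps_inv F"
  have F0: "F$0 = 0" by (simp add: F_def)
  have F1: "F$1 \<noteq> 0" using Q0 by (simp add: F_def fps_inverse_def)
  have G0: "fps_inv F $ 0 = 0" by (simp add: fps_inv_def)
  have "P oo F = H oo (fps_inv F oo F)"
    unfolding P_def by (rule fps_compose_assoc[OF F0 G0, symmetric])
  also have "\<dots> = H" using fps_inv[OF F0 F1] by simp
  finally have HP: "H = P oo F" by simp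
  define T where "T = (\<Sum>i=0..n. fps_const (P$i) * F^i)"
  have HT: "H$j = T$j" if j: "j \<le> n" for j
  proof -
    have "H$j = (\<Sum>i=0..j. P$i * (F^i)$j)" unfolding HP fps_compose_nth ..
    also have "\<dots> = (\<Sum>i=0..n. P$i * (F^i)$j)"
      by (rule sum.mono_neutral_left) (use j startsby_zero_power_prefix[OF F0] in auto)
    also have "\<dots> = T$j" by (simp add: T_def fps_sum_nth)
    finally show ?thesis .
  qed
  have "(fps_deriv H * Q^n) $ (n-1) = (fps_deriv T * Q^n) $ (n-1)"
    by (rule Lam_cong[OF HT n]) simp
  also have "fps_deriv T * Q^n = (\<Sum>i=0..n. fps_const (P$i) * (fps_deriv (F^i) * Q^n))"
    by (simp add: T_def fps_deriv_sum sum_distrib_right mult.assoc)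
  also have "\<dots> $ (n-1) = (\<Sum>i=0..n. P$i * (fps_deriv (F^i) * Q^n) $ (n-1))"
    by (simp add: fps_sum_nth)
  also have "\<dots> = (\<Sum>i=0..n. P$i * (if i = n then of_nat n else 0))"
  proof (rule sum.cong[OF refl])
    fix i assume "i \<in> {0..n}"
    hence "(fps_deriv (F^i) * Q^n) $ (n-1) = (if i = n then of_nat n else 0)"
      unfolding F_def using Lam_F_pow[OF Q0 _ n] by simp
    thus "P$i * (fps_deriv (F^i) * Q^n) $ (n-1) = P$i * (if i = n then of_nat n else 0)" by simp
  qed
  also have "\<dots> = P$n * of_nat n" by (simp add: if_distrib sum.delta cong: if_cong)
  finally show ?thesis by (simp add: P_def F_def mult.commute)
qed


lemma ln_eq: "fps_ln (1::complex) = fps_X * fps_shift 1 (fps_ln 1)"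
  by (rule fps_ext) (simp add: fps_ln_nth)

lemma Q_eq: "fps_ln (1::complex) / fps_X = fps_shift 1 (fps_ln 1)"
  by (subst ln_eq, rule nonzero_mult_div_cancel_left) simp

lemma Q0: "(fps_ln (1::complex) / fps_X) $ 0 = 1"
  unfolding Q_eq by (simp add: fps_ln_nth)

lemma F_eq: "fps_X ^ 2 / fps_ln (1::complex) = fps_X * inverse (fps_ln 1 / fps_X)"
proof -
  have "fps_X ^ 2 / fps_ln (1::complex) = (fps_X * fps_X) / (fps_X * fps_shift 1 (fps_ln 1))"
    by (subst ln_eq) (simp add: power2_eq_square)
  also have "\<dots> = fps_X / fps_shift 1 (fps_ln 1)"
    by (rule div_mult_mult1) simp
  also have "\<dots> = fps_X * inverse (fps_shift 1 (fps_ln 1))"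
    by (rule fps_divide_unit) (simp add: fps_ln_nth)
  finally show ?thesis by (simp add: Q_eq)
qed


theorem theorem4:
  fixes \<alpha> :: complex and S :: "nat \<Rightarrow> complex poly"
  assumes "sheffer S (fps_cpow ((fps_exp 1 + 1) / fps_const 2) \<alpha>)
                     (fps_X ^ 2 / fps_ln 1)"
  shows "\<forall>n\<ge>1. \<forall>x::complex. poly (S n) x =
           (\<Sum>l=0..n-1. of_nat ((n - 1) choose l) * narumi_num l (of_nat n)
                          * euler_poly (n - l) \<alpha> x)"
proof (intro allI impI)
  fix n :: nat and x :: complex
  assume n: "1 \<le> n"
  define h :: "complex fps" where "h = (fps_exp 1 + 1) / fps_const 2"
  define Q :: "complex fps" where "Q = fps_ln 1 / fps_X"
  define G where "G = fps_inv (fps_X * inverse Q)"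
  define H where "H = fps_cpow (fps_const 2 / (fps_exp 1 + 1)) \<alpha> * fps_exp x"
  have Q0: "Q$0 = 1" unfolding Q_def by (rule Q0)
  have h0: "h$0 = 1" unfolding h_def by (simp add: fps_divide_unit fps_const_inverse)
  have h0': "h$0 \<noteq> 0" using h0 by simp
  have e0: "(fps_exp (1::complex) + 1) $ 0 \<noteq> 0" by simp
  have ih: "inverse h = fps_const 2 / (fps_exp 1 + 1)"
  proof -
    have "h = (fps_exp 1 + 1) * fps_const (1/2)"
      unfolding h_def by (simp add: fps_divide_unit fps_const_inverse inverse_eq_divide)
    hence "inverse h = inverse (fps_exp 1 + 1) * fps_const 2"
      by (simp add: fps_inverse_mult fps_const_inverse)
    thus ?thesis by (simp add: fps_divide_unit[OF e0] mult.commute)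
  qed
  have G0: "G$0 = 0" by (simp add: G_def fps_inv_def)
  have gc0: "fps_cpow h \<alpha> $ 0 \<noteq> 0" using cpow_0[OF h0] by simp
  have "Abs_fps (\<lambda>k. poly (S k) x / fact k)
      = inverse (fps_cpow h \<alpha> oo G) * (fps_exp x oo G)"
    using assms unfolding sheffer_def h_def G_def Q_def F_eq by blast
  also have "inverse (fps_cpow h \<alpha> oo G) = inverse (fps_cpow h \<alpha>) oo G"
    by (rule fps_inverse_compose[OF G0 gc0, symmetric])
  also have "inverse (fps_cpow h \<alpha>) = fps_cpow (fps_const 2 / (fps_exp 1 + 1)) \<alpha>"
    using cpow_inverse[OF h0, of \<alpha>] ih by simp
  also have "(fps_cpow (fps_const 2 / (fps_exp 1 + 1)) \<alpha> oo G) * (fps_exp x oo G) = H oo G"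
    unfolding H_def by (rule fps_compose_mult_distrib[OF G0, symmetric])
  finally have gen: "Abs_fps (\<lambda>k. poly (S k) x / fact k) = H oo G" .
  have Sn: "poly (S n) x = fact n * (H oo G) $ n"
  proof -
    have "poly (S n) x / fact n = (H oo G) $ n" using arg_cong[OF gen, of "\<lambda>f. f $ n"] by simp
    thus ?thesis by (simp add: field_simps)
  qed
  have lag: "of_nat n * (H oo G) $ n = (Q^n * fps_deriv H) $ (n-1)"
    using lagrange[OF Q0 n, of H] unfolding G_def by (simp add: mult.commute)
  have nar: "narumi_num l (of_nat n) = fact l * (Q^n) $ l" for l
  proof -
    have cpQ: "fps_cpow (fps_ln 1 / fps_X) (of_nat n) = Q^n" using cpow_nat[OF Q0] Q_def by simp
    have c1: "fps_cpow (1 + fps_X) 0 = 1" by (simp add: fps_cpow_def)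
    show ?thesis unfolding narumi_num_def narumi_poly_def cpQ c1 by simp
  qed
  have eul: "euler_poly k \<alpha> x = fact k * H $ k" for k
    unfolding euler_poly_def H_def ..
  have "poly (S n) x = fact (n-1) * (of_nat n * (H oo G) $ n)"
    using Sn n by (simp add: fact_reduce[of n] algebra_simps)
  also have "\<dots> = fact (n-1) * (\<Sum>l=0..n-1. (Q^n)$l * (of_nat (n-l) * H $ (n-l)))"
    unfolding lag fps_mult_nth
  proof (intro arg_cong[where f="\<lambda>s. fact (n-1) * s"] sum.cong refl)
    fix l assume l: "l \<in> {0..n-1}"
    have a: "Suc (n - Suc l) = n - l" using l n by auto
    have b: "1 + of_nat (n - Suc l) = (of_nat (n - l) :: complex)" using l n
      by (simp add: of_nat_diff)
    show "(Q^n)$l * fps_deriv H $ (n - 1 - l) = (Q^n)$l * (of_nat (n-l) * H $ (n-l))"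
      using a b by simp
  qed
  also have "\<dots> = (\<Sum>l=0..n-1. of_nat ((n - 1) choose l) * narumi_num l (of_nat n)
                          * euler_poly (n - l) \<alpha> x)"
    unfolding sum_distrib_left
  proof (rule sum.cong[OF refl])
    fix l assume l: "l \<in> {0..n-1}"
    have fl: "fact (n-l) = of_nat (n-l) * (fact (n-1-l) :: complex)"
      using l n by (subst fact_reduce) auto
    have bf: "fact l * fact (n-1-l) * of_nat ((n-1) choose l) = (fact (n-1) :: complex)"
      using binomial_fact_lemma[of l "n-1"] l by (metis atLeastAtMost_iff of_nat_fact of_nat_mult)
    show "fact (n-1) * ((Q^n)$l * (of_nat (n-l) * H $ (n-l))) =
       of_nat ((n - 1) choose l) * narumi_num l (of_nat n) * euler_poly (n - l) \<alpha> x"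
      unfolding nar eul fl bf[symmetric] by (simp add: algebra_simps)
  qed
  finally show "poly (S n) x = (\<Sum>l=0..n-1. of_nat ((n - 1) choose l) * narumi_num l (of_nat n)
                          * euler_poly (n - l) \<alpha> x)" .
qed

end
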